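(* Let $\Lambda$ be a probability measure on $[0,1]$ with $\Lambda(\{0\})=c>0$, written as $\Lambda=c\delta_0+(1-c)\Lambda_1$ (with $\Lambda_1$ a probability measure with $\Lambda_1(\{0\})=0$ if $c<1$, and $\Lambda_1\equiv0$ if $c=1$). Assume that $$\lim_{q\to\infty}\frac{\Psi_1(q)}{q^{3/2}}=A$$ for some $A\in[0,\infty]$. Then $$\lim_{t\to0+}\frac1{\sqrt t}\left(\frac{ct}{2}v_t-1\right)=-\frac{2\sqrt2}{3\sqrt c}(1-c)A.$$
   Context: $\Psi(q)=\int_{[0,1]}(qy-1+(1-y)^q)\frac{\Lambda(dy)}{y^2}$ for $q\ge1$, the integrand being extended continuously to $y=0$ by the value $q(q-1)/2$; $\Psi_1$ is defined by the same formula with $\Lambda_1$ in place of $\Lambda$ (so $\Psi(q)=c\,q(q-1)/2+(1-c)\Psi_1(q)$). The function $v:(0,\infty)\to(1,\infty)$ is defined by $t=\int_{v_t}^\infty\frac{dq}{\Psi(q)}$. *)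

theory Defs
  imports "HOL-Probability.Probability"
begin

text \<open>The integrand (q y - 1 + (1-y)^q)/y^2, extended continuously to y = 0 by q(q-1)/2.\<close>
definition psi_int :: "real \<Rightarrow> real \<Rightarrow> real" where
  "psi_int q y = (if y = 0 then q * (q - 1) / 2 else (q * y - 1 + (1 - y) powr q) / y\<^sup>2)"

definition Psi :: "real measure \<Rightarrow> real \<Rightarrow> real" where
  "Psi M q = (LINT y:{0..1}|M. psi_int q y)"

end

theory Submission
  imports Defs "HOL-Real_Asymp.Real_Asymp"
begin

lemma bern_powr:
  fixes p x :: real
  assumes "p \<ge> 1" "0 \<le> x" "x \<le> 1"
  shows "1 + p * (x - 1) \<le> x powr p"
proof (cases "x = 0 \<or> x = 1")
  case True then show ?thesis using assms by auto
next
  case False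
  then have x: "0 < x" "x < 1" using assms by auto
  have "\<exists>z>x. z < 1 \<and> 1 powr p - x powr p = (1 - x) * (p * z powr (p - 1))"
    by (rule MVT2) (use x in \<open>auto intro!: derivative_eq_intros\<close>)
  then obtain z where z: "x < z" "z < 1" "1 - x powr p = (1 - x) * (p * z powr (p - 1))" by auto
  have "z powr (p - 1) \<le> 1" using z x assms by (intro powr_le1) auto
  then have "(1 - x) * (p * z powr (p - 1)) \<le> (1 - x) * p"
    using x assms by (intro mult_left_mono) (auto simp: mult_le_cancel_left1)
  then show ?thesis using z by (simp add: algebra_simps)
qed

lemma psi_int_nonneg:
  assumes "q \<ge> 1" "0 \<le> y" "y \<le> 1"
  shows "0 \<le> psi_int q y"
proof -
  have "1 + q * ((1 - y) - 1) \<le> (1 - y) powr q" using bern_powr[of q "1-y"] assms by auto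
  then show ?thesis using assms unfolding psi_int_def by auto
qed

lemma psi_int_le:
  assumes "q \<ge> 2" "0 \<le> y" "y \<le> 1"
  shows "psi_int q y \<le> q * (q - 1)"
proof -
  consider "y = 0" | "y = 1" | "0 < y \<and> y < 1" using assms by linarith
  then show ?thesis
  proof cases
    case 1 then show ?thesis using assms by (simp add: psi_int_def)
  next
    case 2 then show ?thesis using assms by (simp add: psi_int_def)
  next
    case 3
    have "\<exists>z>0. z < y \<and> (1 - y) powr q - (1 - 0) powr q = (y - 0) * (- q * (1 - z) powr (q - 1))"
      by (rule MVT2) (use 3 in \<open>auto intro!: derivative_eq_intros\<close>)
    then obtain z where z: "0 < z" "z < y" "(1 - y) powr q - 1 = y * (- q * (1 - z) powr (q - 1))" by auto
    have "1 + (q - 1) * ((1 - z) - 1) \<le> (1 - z) powr (q - 1)"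
      using bern_powr[of "q - 1" "1 - z"] assms z 3 by auto
    then have b: "1 - (q - 1) * y \<le> (1 - z) powr (q - 1)"
    proof -
      have "(q - 1) * z \<le> (q - 1) * y" using z assms by (intro mult_left_mono) auto
      then show ?thesis using \<open>1 + (q - 1) * ((1 - z) - 1) \<le> (1 - z) powr (q - 1)\<close> by (simp add: algebra_simps)
    qed
    have "(1 - y) powr q - 1 \<le> - q * y * (1 - (q - 1) * y)"
    proof -
      have "q * y * (1 - (q - 1) * y) \<le> q * y * (1 - z) powr (q - 1)"
        using b 3 assms by (intro mult_left_mono) auto
      then show ?thesis using z(3) by (simp add: algebra_simps)
    qed
    then have num: "q * y - 1 + (1 - y) powr q \<le> q * (q - 1) * y^2"
      by (simp add: algebra_simps power2_eq_square)
    have "(q * y - 1 + (1 - y) powr q) / y^2 \<le> q * (q - 1)"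
      using num 3 by (simp add: divide_le_eq)
    then show ?thesis using 3 by (simp add: psi_int_def)
  qed
qed

lemma psi_int_meas: "psi_int q \<in> borel_measurable borel"
  unfolding psi_int_def by measurable

lemma recip_bounds:
  fixes X Y :: real
  assumes "X > 0" "X + Y \<ge> X / 2"
  shows "1 / X - Y / X^2 \<le> 1 / (X + Y)" "1 / (X + Y) \<le> 1 / X - Y / X^2 + 2 * Y^2 / X^3"
proof -
  have XY: "X + Y > 0" using assms by linarith
  have ne: "X + Y \<noteq> 0" "X \<noteq> 0" using XY assms by auto
  have id: "1 / (X + Y) = 1 / X - Y / X^2 + Y^2 / (X^2 * (X + Y))"
    using ne by (simp add: divide_simps) (simp add: algebra_simps power2_eq_square)
  have "0 \<le> Y^2 / (X^2 * (X + Y))" using XY by simp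
  then show "1 / X - Y / X^2 \<le> 1 / (X + Y)" using id by linarith
  have "Y^2 / (X^2 * (X + Y)) \<le> Y^2 / (X^2 * (X / 2))"
    using assms XY by (intro divide_left_mono mult_left_mono) auto
  also have "\<dots> = 2 * Y^2 / X^3" using assms by (simp add: field_simps power2_eq_square power3_eq_cube)
  finally show "1 / (X + Y) \<le> 1 / X - Y / X^2 + 2 * Y^2 / X^3" using id by linarith
qed

lemma half_bound:
  fixes c \<beta> q :: real
  assumes "c > 0" "q > 0" "q \<ge> 16 * \<beta>^2 / c^2"
  shows "c * q^2 / 2 + \<beta> * q * sqrt q \<ge> (c * q^2 / 2) / 2"
proof -
  have "(4 * \<bar>\<beta>\<bar> / c)^2 \<le> q" using assms by (simp add: power_divide power_mult_distrib)
  then have "4 * \<bar>\<beta>\<bar> / c \<le> sqrt q" using real_le_rsqrt by blast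
  then have "4 * \<bar>\<beta>\<bar> \<le> c * sqrt q" using assms by (simp add: divide_le_eq mult.commute)
  then have "4 * \<bar>\<beta>\<bar> * (q * sqrt q) \<le> c * sqrt q * (q * sqrt q)"
    using assms by (intro mult_right_mono) auto
  also have "\<dots> = c * q^2" using assms by (simp add: power2_eq_square algebra_simps)
  finally have "\<bar>\<beta> * q * sqrt q\<bar> \<le> c * q^2 / 4"
    using assms by (simp add: abs_mult)
  then show ?thesis by linarith
qed

lemma pt_exprs:
  fixes c \<beta> q :: real
  assumes "c > 0" "q > 0"
  shows "1 / (c * q^2 / 2) = (2/c) * (1 / q^2)"
    "(\<beta> * q * sqrt q) / (c * q^2 / 2)^2 = (4 * \<beta> / c^2) * (1 / (q^2 * sqrt q))"
    "2 * (\<beta> * q * sqrt q)^2 / (c * q^2 / 2)^3 = (16 * \<beta>^2 / c^3) * (1 / q^3)"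
proof -
  have s: "sqrt q * sqrt q = q" using assms by simp
  show "1 / (c * q^2 / 2) = (2/c) * (1 / q^2)" using assms by (simp add: field_simps)
  show "(\<beta> * q * sqrt q) / (c * q^2 / 2)^2 = (4 * \<beta> / c^2) * (1 / (q^2 * sqrt q))"
    using assms s by (simp add: field_simps power2_eq_square)
  show "2 * (\<beta> * q * sqrt q)^2 / (c * q^2 / 2)^3 = (16 * \<beta>^2 / c^3) * (1 / q^3)"
    using assms s by (simp add: field_simps power2_eq_square power3_eq_cube)
qed

lemma powr_LBINT:
  fixes a e :: real
  assumes "e < -1" "a > 0"
  shows "set_integrable lborel {a..} (\<lambda>x. x powr e)"
    "(LBINT x:{a..}. x powr e) = -(a powr (e+1)) / (e+1)"
proof -
  have hi: "((\<lambda>x. x powr e) has_integral -(a powr (e+1)) / (e+1)) {a..}"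
    using has_integral_powr_to_inf[OF assms] .
  have "(\<lambda>x. x powr e) absolutely_integrable_on {a..}"
    by (rule nonnegative_absolutely_integrable_1) (use hi in \<open>auto simp: integrable_on_def\<close>)
  then have "set_integrable lebesgue {a..} (\<lambda>x. x powr e)" by simp
  then show si: "set_integrable lborel {a..} (\<lambda>x. x powr e)"
    unfolding set_integrable_def
    by (subst (asm) integrable_completion) auto
  show "(LBINT x:{a..}. x powr e) = -(a powr (e+1)) / (e+1)"
    using set_borel_integral_eq_integral(2)[OF si] hi integral_unique by metis
qed

lemma transfer_int:
  fixes a e :: real and g :: "real \<Rightarrow> real"
  assumes "e < -1" "a > 0" "\<And>x. x > 0 \<Longrightarrow> g x = x powr e"
  shows "set_integrable lborel {a..} g" "(LBINT x:{a..}. g x) = -(a powr (e+1)) / (e+1)"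
proof -
  have eq: "x \<in> {a..} \<Longrightarrow> x powr e = g x" for x
  proof -
    assume "x \<in> {a..}" then have "x > 0" using assms(2) by auto
    then show ?thesis using assms(3) by simp
  qed
  show "set_integrable lborel {a..} g"
    using powr_LBINT(1)[OF assms(1,2)] set_integrable_cong[of lborel lborel "{a..}" "{a..}", OF refl refl eq] by simp
  have "(LBINT x:{a..}. g x) = (LBINT x:{a..}. x powr e)"
    by (rule set_lebesgue_integral_cong) (use eq in auto)
  then show "(LBINT x:{a..}. g x) = -(a powr (e+1)) / (e+1)" using powr_LBINT(2)[OF assms(1,2)] by simp
qed

lemma int2:
  fixes v :: real
  assumes "v > 0"
  shows "set_integrable lborel {v..} (\<lambda>q. 1 / q^2)" "(LBINT q:{v..}. 1 / q^2) = 1 / v"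
proof -
  have *: "1 / x^2 = x powr (-2)" if "x > 0" for x :: real
    using that by (simp add: powr_minus inverse_eq_divide)
  show "set_integrable lborel {v..} (\<lambda>q. 1 / q^2)" using transfer_int(1)[of "-2" v "\<lambda>q. 1 / q^2", OF _ assms *] by simp
  have "-(v powr (-2+1)) / (-2+1) = 1 / v" using assms by (simp add: powr_minus inverse_eq_divide)
  then show "(LBINT q:{v..}. 1 / q^2) = 1 / v" using transfer_int(2)[of "-2" v "\<lambda>q. 1 / q^2", OF _ assms *] by simp
qed

lemma int3:
  fixes v :: real
  assumes "v > 0"
  shows "set_integrable lborel {v..} (\<lambda>q. 1 / q^3)" "(LBINT q:{v..}. 1 / q^3) = 1 / (2 * v^2)"
proof -
  have *: "1 / x^3 = x powr (-3)" if "x > 0" for x :: real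
    using that by (simp add: powr_minus inverse_eq_divide)
  show "set_integrable lborel {v..} (\<lambda>q. 1 / q^3)" using transfer_int(1)[of "-3" v "\<lambda>q. 1 / q^3", OF _ assms *] by simp
  have "-(v powr (-3+1)) / (-3+1) = 1 / (2 * v^2)" using assms by (simp add: powr_minus inverse_eq_divide)
  then show "(LBINT q:{v..}. 1 / q^3) = 1 / (2 * v^2)" using transfer_int(2)[of "-3" v "\<lambda>q. 1 / q^3", OF _ assms *] by simp
qed

lemma powr_52: "(x::real) > 0 \<Longrightarrow> x powr (5/2) = x^2 * sqrt x"
proof -
  assume x: "x > 0"
  have e: "(5/2::real) = 2 + 1/2" by simp
  have "x powr (5/2) = x powr (2 + 1/2)" by (subst e) (rule refl)
  also have "\<dots> = x powr 2 * x powr (1/2)" by (rule powr_add)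
  also have "\<dots> = x^2 * sqrt x" using x by (simp only: powr_half_sqrt less_imp_le powr_numeral)
  finally show ?thesis .
qed

lemma powr_32: "(x::real) > 0 \<Longrightarrow> x powr (3/2) = x * sqrt x"
proof -
  assume x: "x > 0"
  have e: "(3/2::real) = 1 + 1/2" by simp
  have "x powr (3/2) = x powr (1 + 1/2)" by (subst e) (rule refl)
  also have "\<dots> = x powr 1 * x powr (1/2)" by (rule powr_add)
  also have "\<dots> = x * sqrt x" using x by (simp add: powr_half_sqrt)
  finally show ?thesis .
qed

lemma int52:
  fixes v :: real
  assumes "v > 0"
  shows "set_integrable lborel {v..} (\<lambda>q. 1 / (q^2 * sqrt q))" "(LBINT q:{v..}. 1 / (q^2 * sqrt q)) = (2/3) / (v * sqrt v)"
proof -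
  have *: "1 / (x^2 * sqrt x) = x powr (-5/2)" if "x > 0" for x :: real
  proof -
    have "x powr (-5/2) = x powr (-(5/2))" by simp
    also have "\<dots> = inverse (x powr (5/2))" by (rule powr_minus)
    finally show ?thesis using that powr_52[of x] by (simp add: inverse_eq_divide)
  qed
  show "set_integrable lborel {v..} (\<lambda>q. 1 / (q^2 * sqrt q))" using transfer_int(1)[of "-5/2" v "\<lambda>q. 1 / (q^2 * sqrt q)", OF _ assms *] by simp
  have "-(v powr (-5/2+1)) / (-5/2+1) = (2/3) / (v * sqrt v)"
  proof -
    have e: "(-5/2+1::real) = -(3/2)" by simp
    have "v powr (-5/2+1) = v powr (-(3/2))" by (subst e) (rule refl)
    also have "\<dots> = 1 / (v * sqrt v)" using assms powr_32[of v] by (simp add: powr_minus inverse_eq_divide)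
    finally show ?thesis by simp
  qed
  then show "(LBINT q:{v..}. 1 / (q^2 * sqrt q)) = (2/3) / (v * sqrt v)" using transfer_int(2)[of "-5/2" v "\<lambda>q. 1 / (q^2 * sqrt q)", OF _ assms *] by simp
qed

lemma F_upper:
  fixes P :: "real \<Rightarrow> real" and c \<beta> v :: real
  assumes c: "c > 0" and v: "v > 0" and vb: "v \<ge> 16 * \<beta>^2 / c^2"
    and I: "set_integrable lborel {v..} (\<lambda>q. 1 / P q)"
    and H: "\<And>q. q \<ge> v \<Longrightarrow> P q \<ge> c * q^2 / 2 + \<beta> * q * sqrt q"
  shows "(LBINT q:{v..}. 1 / P q) \<le> (2/c) * (1/v) - (4*\<beta>/c^2) * ((2/3) / (v * sqrt v)) + (16*\<beta>^2/c^3) * (1 / (2 * v^2))"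
proof -
  define g where "g q = (2/c) * (1 / q^2) - (4*\<beta>/c^2) * (1 / (q^2 * sqrt q)) + (16*\<beta>^2/c^3) * (1 / q^3)" for q :: real
  have i2: "set_integrable lborel {v..} (\<lambda>q. (2/c) * (1 / q^2))" by (rule set_integrable_mult_right) (rule int2(1)[OF v])
  have i52: "set_integrable lborel {v..} (\<lambda>q. (4*\<beta>/c^2) * (1 / (q^2 * sqrt q)))" by (rule set_integrable_mult_right) (rule int52(1)[OF v])
  have i3: "set_integrable lborel {v..} (\<lambda>q. (16*\<beta>^2/c^3) * (1 / q^3))" by (rule set_integrable_mult_right) (rule int3(1)[OF v])
  have ig: "set_integrable lborel {v..} g"
    unfolding g_def by (intro set_integral_add set_integral_diff i2 i52 i3)
  have "(LBINT q:{v..}. g q) = (LBINT q:{v..}. (2/c) * (1 / q^2) - (4*\<beta>/c^2) * (1 / (q^2 * sqrt q))) + (LBINT q:{v..}. (16*\<beta>^2/c^3) * (1 / q^3))"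
    unfolding g_def by (intro set_integral_add(2) set_integral_diff(1) i2 i52 i3)
  also have "\<dots> = (2/c) * (1/v) - (4*\<beta>/c^2) * ((2/3) / (v * sqrt v)) + (16*\<beta>^2/c^3) * (1 / (2 * v^2))"
    by (simp only: set_integral_diff(2)[OF i2 i52] set_integral_mult_right int2(2)[OF v] int52(2)[OF v] int3(2)[OF v])
  finally have gv: "(LBINT q:{v..}. g q) = (2/c) * (1/v) - (4*\<beta>/c^2) * ((2/3) / (v * sqrt v)) + (16*\<beta>^2/c^3) * (1 / (2 * v^2))" .
  have pt: "1 / P q \<le> g q" if q: "q \<in> {v..}" for q
  proof -
    have q0: "q > 0" "q \<ge> 16 * \<beta>^2 / c^2" using q v vb by auto
    have hb: "c * q^2 / 2 + \<beta> * q * sqrt q \<ge> (c * q^2 / 2) / 2" by (rule half_bound[OF c q0])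
    have X: "c * q^2 / 2 > 0" using c q0 by simp
    then have pos: "c * q^2 / 2 + \<beta> * q * sqrt q > 0" using hb by linarith
    have "1 / P q \<le> 1 / (c * q^2 / 2 + \<beta> * q * sqrt q)"
      using H[of q] q pos by (intro divide_left_mono) auto
    also have "\<dots> \<le> 1 / (c * q^2 / 2) - (\<beta> * q * sqrt q) / (c * q^2 / 2)^2 + 2 * (\<beta> * q * sqrt q)^2 / (c * q^2 / 2)^3"
      by (rule recip_bounds(2)[OF X hb])
    also have "\<dots> = g q" unfolding g_def pt_exprs[OF c q0(1)] ..
    finally show ?thesis .
  qed
  have "(LBINT q:{v..}. 1 / P q) \<le> (LBINT q:{v..}. g q)"
    by (rule set_integral_mono[OF I ig pt])
  then show ?thesis using gv by simp
qed

lemma F_lower: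
  fixes P :: "real \<Rightarrow> real" and c \<beta> v :: real
  assumes c: "c > 0" and v: "v > 0" and vb: "v \<ge> 16 * \<beta>^2 / c^2"
    and I: "set_integrable lborel {v..} (\<lambda>q. 1 / P q)"
    and H: "\<And>q. q \<ge> v \<Longrightarrow> 0 < P q \<and> P q \<le> c * q^2 / 2 + \<beta> * q * sqrt q"
  shows "(LBINT q:{v..}. 1 / P q) \<ge> (2/c) * (1/v) - (4*\<beta>/c^2) * ((2/3) / (v * sqrt v))"
proof -
  define g where "g q = (2/c) * (1 / q^2) - (4*\<beta>/c^2) * (1 / (q^2 * sqrt q))" for q :: real
  have i2: "set_integrable lborel {v..} (\<lambda>q. (2/c) * (1 / q^2))" by (rule set_integrable_mult_right) (rule int2(1)[OF v])
  have i52: "set_integrable lborel {v..} (\<lambda>q. (4*\<beta>/c^2) * (1 / (q^2 * sqrt q)))" by (rule set_integrable_mult_right) (rule int52(1)[OF v])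
  have ig: "set_integrable lborel {v..} g"
    unfolding g_def by (intro set_integral_diff i2 i52)
  have gv: "(LBINT q:{v..}. g q) = (2/c) * (1/v) - (4*\<beta>/c^2) * ((2/3) / (v * sqrt v))"
    unfolding g_def by (simp only: set_integral_diff(2)[OF i2 i52] set_integral_mult_right int2(2)[OF v] int52(2)[OF v])
  have pt: "g q \<le> 1 / P q" if q: "q \<in> {v..}" for q
  proof -
    have q0: "q > 0" "q \<ge> 16 * \<beta>^2 / c^2" using q v vb by auto
    have hb: "c * q^2 / 2 + \<beta> * q * sqrt q \<ge> (c * q^2 / 2) / 2" by (rule half_bound[OF c q0])
    have X: "c * q^2 / 2 > 0" using c q0 by simp
    have "g q = 1 / (c * q^2 / 2) - (\<beta> * q * sqrt q) / (c * q^2 / 2)^2"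
      unfolding g_def pt_exprs[OF c q0(1)] ..
    also have "\<dots> \<le> 1 / (c * q^2 / 2 + \<beta> * q * sqrt q)"
      by (rule recip_bounds(1)[OF X hb])
    also have "\<dots> \<le> 1 / P q"
      using H[of q] q by (intro divide_left_mono) auto
    finally show ?thesis .
  qed
  have "(LBINT q:{v..}. g q) \<le> (LBINT q:{v..}. 1 / P q)"
    by (rule set_integral_mono[OF ig I pt])
  then show ?thesis using gv by simp
qed

lemma S_upper:
  fixes P :: "real \<Rightarrow> real" and c \<beta> v :: real
  assumes c: "c > 0" and v: "v > 0" and vb: "v \<ge> 16 * \<beta>^2 / c^2"
    and I: "set_integrable lborel {v..} (\<lambda>q. 1 / P q)"
    and H: "\<And>q. q \<ge> v \<Longrightarrow> P q \<ge> c * q^2 / 2 + \<beta> * q * sqrt q"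
  shows "(c/2) * v * sqrt v * ((LBINT q:{v..}. 1 / P q) - 2 / (c * v)) \<le> -(4*\<beta>/(3*c)) + (4*\<beta>^2/c^2) / sqrt v"
proof -
  define F where "F = (LBINT q:{v..}. 1 / P q)"
  have "F \<le> (2/c) * (1/v) - (4*\<beta>/c^2) * ((2/3) / (v * sqrt v)) + (16*\<beta>^2/c^3) * (1 / (2 * v^2))"
    unfolding F_def by (rule F_upper[OF c v vb I H])
  then have "F - 2 / (c * v) \<le> - (4*\<beta>/c^2) * ((2/3) / (v * sqrt v)) + (16*\<beta>^2/c^3) * (1 / (2 * v^2))"
    by simp
  then have "(c/2) * v * sqrt v * (F - 2 / (c * v)) \<le> (c/2) * v * sqrt v * (- (4*\<beta>/c^2) * ((2/3) / (v * sqrt v)) + (16*\<beta>^2/c^3) * (1 / (2 * v^2)))"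
    using c v by (intro mult_left_mono) auto
  also have "\<dots> = -(4*\<beta>/(3*c)) + (4*\<beta>^2/c^2) / sqrt v"
  proof -
    have sv: "sqrt v > 0" using v by simp
    have e1: "(c/2) * v * sqrt v * (-(4*\<beta>/c^2)*((2/3)/(v * sqrt v))) = -(4*\<beta>/(3*c))"
      using c v sv by (simp add: field_simps power2_eq_square)
    have e2: "(c/2) * v * sqrt v * ((16*\<beta>^2/c^3)*(1/(2 * v^2))) = (4*\<beta>^2/c^2)*(sqrt v / v)"
      using c v by (simp add: field_simps power2_eq_square power3_eq_cube)
    have e3: "sqrt v / v = 1 / sqrt v"
      using sqrt_divide_self_eq[of v] v by (simp add: inverse_eq_divide)
    show ?thesis unfolding distrib_left e1 e2 e3 by simp
  qed
  finally show ?thesis unfolding F_def .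
qed

lemma S_lower:
  fixes P :: "real \<Rightarrow> real" and c \<beta> v :: real
  assumes c: "c > 0" and v: "v > 0" and vb: "v \<ge> 16 * \<beta>^2 / c^2"
    and I: "set_integrable lborel {v..} (\<lambda>q. 1 / P q)"
    and H: "\<And>q. q \<ge> v \<Longrightarrow> 0 < P q \<and> P q \<le> c * q^2 / 2 + \<beta> * q * sqrt q"
  shows "(c/2) * v * sqrt v * ((LBINT q:{v..}. 1 / P q) - 2 / (c * v)) \<ge> -(4*\<beta>/(3*c))"
proof -
  define F where "F = (LBINT q:{v..}. 1 / P q)"
  have "F \<ge> (2/c) * (1/v) - (4*\<beta>/c^2) * ((2/3) / (v * sqrt v))"
    unfolding F_def by (rule F_lower[OF c v vb I H])
  then have "F - 2 / (c * v) \<ge> - (4*\<beta>/c^2) * ((2/3) / (v * sqrt v))"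
    by simp
  then have "(c/2) * v * sqrt v * (F - 2 / (c * v)) \<ge> (c/2) * v * sqrt v * (- (4*\<beta>/c^2) * ((2/3) / (v * sqrt v)))"
    using c v by (intro mult_left_mono) auto
  moreover have "(c/2) * v * sqrt v * (-(4*\<beta>/c^2)*((2/3)/(v * sqrt v))) = -(4*\<beta>/(3*c))"
    using c v by (simp add: field_simps power2_eq_square)
  ultimately show ?thesis unfolding F_def by simp
qed

lemma Psi_decomp:
  fixes \<Lambda> \<Lambda>1 :: "real measure" and c q :: real
  assumes P: "prob_space \<Lambda>" and sL: "sets \<Lambda> = sets borel" and cdef: "c = measure \<Lambda> {0}"
    and F1: "finite_measure \<Lambda>1" and s1: "sets \<Lambda>1 = sets borel" and z1: "measure \<Lambda>1 {0} = 0"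
    and eq: "\<forall>B \<in> sets borel. measure \<Lambda> B = c * indicator B 0 + (1 - c) * measure \<Lambda>1 B"
    and c1: "c \<le> 1" and q: "q \<ge> 2"
  shows "Psi \<Lambda> q = c * (q * (q - 1) / 2) + (1 - c) * Psi \<Lambda>1 q"
proof -
  interpret L: prob_space \<Lambda> by fact
  interpret L1: finite_measure \<Lambda>1 by fact
  define f where "f y = indicator {0..1} y * psi_int q y" for y :: real
  have fm[measurable]: "f \<in> borel_measurable borel" unfolding f_def using psi_int_meas by measurable
  have fb: "norm (f y) \<le> q * (q - 1)" for y
    using psi_int_le[OF q] psi_int_nonneg[of q y] q by (auto simp: f_def indicator_def)
  have mL[measurable]: "f \<in> borel_measurable \<Lambda>" using fm sL by (simp add: measurable_def space_borel)
  have mL1[measurable]: "f \<in> borel_measurable \<Lambda>1" using fm s1 by (simp add: measurable_def space_borel)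
  have spL: "space \<Lambda> = UNIV" using sL sets_eq_imp_space_eq by fastforce
  have spL1: "space \<Lambda>1 = UNIV" using s1 sets_eq_imp_space_eq by fastforce
  have PsiL: "Psi \<Lambda> q = integral\<^sup>L \<Lambda> f" by (simp add: Psi_def set_lebesgue_integral_def f_def[abs_def])
  have PsiL1: "Psi \<Lambda>1 q = integral\<^sup>L \<Lambda>1 f" by (simp add: Psi_def set_lebesgue_integral_def f_def[abs_def])
  have intL: "integrable \<Lambda> f" by (rule L.integrable_const_bound[where B="q*(q-1)"]) (use fb in auto)
  have intL1: "integrable \<Lambda>1 f" by (rule L1.integrable_const_bound[where B="q*(q-1)"]) (use fb in auto)
  have f0: "f 0 = q * (q - 1) / 2" by (simp add: f_def psi_int_def)
  have split: "f y = indicator {0} y * f 0 + indicator {0<..} y * f y" for y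
    by (auto simp: f_def indicator_def psi_int_def)
  have "integral\<^sup>L \<Lambda> f = integral\<^sup>L \<Lambda> (\<lambda>y. indicator {0} y * f 0 + indicator {0<..} y * f y)"
    by (rule arg_cong[where f="integral\<^sup>L \<Lambda>"]) (use split in auto)
  also have "\<dots> = integral\<^sup>L \<Lambda> (\<lambda>y. indicator {0} y * f 0) + integral\<^sup>L \<Lambda> (\<lambda>y. indicator {0<..} y * f y)"
  proof (rule Bochner_Integration.integral_add)
    show "integrable \<Lambda> (\<lambda>y. indicator {0} y * f 0)"
      using integrable_mult_indicator[of "{0}" \<Lambda> "\<lambda>_. f 0"] sL by simp
    show "integrable \<Lambda> (\<lambda>y. indicator {0<..} y * f y)"
      using integrable_mult_indicator[of "{0<..}" \<Lambda> f] sL intL by simp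
  qed
  also have "integral\<^sup>L \<Lambda> (\<lambda>y. indicator {0} y * f 0) = c * f 0"
    using cdef by (simp add: spL)
  finally have A: "integral\<^sup>L \<Lambda> f = c * f 0 + integral\<^sup>L \<Lambda> (\<lambda>y. indicator {0<..} y * f y)" .
  have "integral\<^sup>L \<Lambda>1 f = integral\<^sup>L \<Lambda>1 (\<lambda>y. indicator {0<..} y * f y)"
  proof (rule integral_cong_AE)
    have "{0} \<in> null_sets \<Lambda>1" using z1 s1 L1.emeasure_eq_measure by (auto simp: null_sets_def)
    then show "AE x in \<Lambda>1. f x = indicator {0<..} x * f x"
      by (rule AE_I') (auto simp: f_def indicator_def)
    show "(\<lambda>y. indicator {0<..} y * f y) \<in> borel_measurable \<Lambda>1"
      using s1 by measurable
  qed auto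
  then have B: "(1 - c) * integral\<^sup>L \<Lambda>1 f = integral\<^sup>L \<Lambda>1 (\<lambda>y. (1 - c) * indicator {0<..} y * f y)"
    by (simp add: mult.assoc)
  have D1: "integral\<^sup>L \<Lambda> (\<lambda>y. indicator {0<..} y * f y) = integral\<^sup>L (density \<Lambda> (\<lambda>y. ennreal (indicator {0<..} y :: real))) f"
    using integral_density[of f \<Lambda> "\<lambda>y. indicator {0<..} y"] sL by simp
  have D2: "integral\<^sup>L \<Lambda>1 (\<lambda>y. (1 - c) * indicator {0<..} y * f y) = integral\<^sup>L (density \<Lambda>1 (\<lambda>y. ennreal ((1 - c) * indicator {0<..} y))) f"
    using integral_density[of f \<Lambda>1 "\<lambda>y. (1 - c) * indicator {0<..} y"] s1 c1 by (simp add: mult.assoc)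
  have Meq: "density \<Lambda> (\<lambda>y. ennreal (indicator {0<..} y :: real)) = density \<Lambda>1 (\<lambda>y. ennreal ((1 - c) * indicator {0<..} y))"
  proof (rule measure_eqI)
    show "sets (density \<Lambda> (\<lambda>y. ennreal (indicator {0<..} y :: real))) = sets (density \<Lambda>1 (\<lambda>y. ennreal ((1 - c) * indicator {0<..} y)))"
      using sL s1 by simp
  next
    fix X assume "X \<in> sets (density \<Lambda> (\<lambda>y. ennreal (indicator {0<..} y :: real)))"
    then have X[measurable]: "X \<in> sets borel" using sL by simp
    have "emeasure (density \<Lambda> (\<lambda>y. ennreal (indicator {0<..} y :: real))) X = emeasure \<Lambda> ({0<..} \<inter> X)"
      using emeasure_restricted[of "{0<..}" \<Lambda> X] sL by (simp add: ennreal_indicator)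
    also have "\<dots> = ennreal (measure \<Lambda> ({0<..} \<inter> X))" by (simp add: L.emeasure_eq_measure)
    also have "measure \<Lambda> ({0<..} \<inter> X) = (1 - c) * measure \<Lambda>1 ({0<..} \<inter> X)"
      using eq X by auto
    also have "ennreal ((1 - c) * measure \<Lambda>1 ({0<..} \<inter> X)) = ennreal (1 - c) * emeasure \<Lambda>1 ({0<..} \<inter> X)"
      using c1 by (simp add: L1.emeasure_eq_measure ennreal_mult)
    also have "\<dots> = (\<integral>\<^sup>+ y. ennreal (1 - c) * indicator ({0<..} \<inter> X) y \<partial>\<Lambda>1)"
      by (rule nn_integral_cmult_indicator[symmetric]) (simp add: s1)
    also have "\<dots> = (\<integral>\<^sup>+ y. ennreal ((1 - c) * indicator {0<..} y) * indicator X y \<partial>\<Lambda>1)"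
      using c1 by (intro nn_integral_cong) (auto simp: indicator_def)
    also have "\<dots> = emeasure (density \<Lambda>1 (\<lambda>y. ennreal ((1 - c) * indicator {0<..} y))) X"
      by (rule emeasure_density[symmetric]) (use s1 in measurable)
    finally show "emeasure (density \<Lambda> (\<lambda>y. ennreal (indicator {0<..} y :: real))) X = emeasure (density \<Lambda>1 (\<lambda>y. ennreal ((1 - c) * indicator {0<..} y))) X" .
  qed
  show ?thesis
    using A B D1 D2 Meq PsiL PsiL1 f0 by (simp add: mult.commute)
qed

lemma Psi_nonneg: "q \<ge> 1 \<Longrightarrow> Psi M q \<ge> 0"
  unfolding Psi_def set_lebesgue_integral_def
  by (rule Bochner_Integration.integral_nonneg) (auto simp: indicator_def intro: psi_int_nonneg)

lemma Psi_le:
  assumes P: "prob_space M" and s: "sets M = sets borel" and q: "q \<ge> 2"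
  shows "Psi M q \<le> q * (q - 1)"
proof -
  interpret L: prob_space M by fact
  define f where "f y = indicator {0..1} y * psi_int q y" for y :: real
  have fm[measurable]: "f \<in> borel_measurable borel" unfolding f_def using psi_int_meas by measurable
  have fb: "norm (f y) \<le> q * (q - 1)" for y
    using psi_int_le[OF q] psi_int_nonneg[of q y] q by (auto simp: f_def indicator_def)
  have mL: "f \<in> borel_measurable M" using fm s by (simp add: measurable_def space_borel)
  have intL: "integrable M f" by (rule L.integrable_const_bound[where B="q*(q-1)"]) (use fb mL in auto)
  have "Psi M q = integral\<^sup>L M f" by (simp add: Psi_def set_lebesgue_integral_def f_def[abs_def])
  also have "\<dots> \<le> integral\<^sup>L M (\<lambda>_. q * (q - 1))"
    by (rule integral_mono[OF intL]) (use fb in \<open>auto simp: abs_le_iff\<close>)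
  also have "\<dots> = q * (q - 1)" by (simp add: L.prob_space)
  finally show ?thesis .
qed

lemma set_int_sub:
  fixes f :: "real \<Rightarrow> real"
  assumes I: "set_integrable lborel A f" and BA: "B \<subseteq> A" and B: "B \<in> sets borel"
    and nn: "\<And>x. x \<in> A \<Longrightarrow> 0 \<le> f x"
  shows "set_integrable lborel B f" "(LBINT x:B. f x) \<le> (LBINT x:A. f x)"
proof -
  show IB: "set_integrable lborel B f" by (rule set_integrable_subset[OF I]) (use B BA in auto)
  show "(LBINT x:B. f x) \<le> (LBINT x:A. f x)"
    using IB I unfolding set_integrable_def set_lebesgue_integral_def
    by (intro integral_mono) (use BA nn in \<open>auto simp: indicator_def\<close>)
qed

lemma lin1: fixes S T y s b :: real shows "S \<le> b + T \<Longrightarrow> T < (y - s)/2 \<Longrightarrow> b = s + (y - s)/2 \<Longrightarrow> S < y" by (simp add: field_simps)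
lemma lin2: fixes S T K b :: real shows "S \<le> b + T \<Longrightarrow> T < 1 \<Longrightarrow> b \<le> K - 1 \<Longrightarrow> S < K" by linarith

lemma val_aux: fixes s r a :: real assumes "s > 0" "r > 0" "s * s = 2"
  shows "-(4 * ((1 - r * r) * a) / (3 * (r * r))) / (s / r) = -(2 * s / (3 * r)) * (1 - r * r) * a"
proof -
  have "-(4 * ((1 - r * r) * a) / (3 * (r * r))) / (s / r) = -((2 * (s * s)) * ((1 - r * r) * a) / (3 * (r * r))) / (s / r)"
    using assms(3) by simp
  also have "\<dots> = -(2 * s / (3 * r)) * (1 - r * r) * a"
    using assms(1,2) by (simp add: field_simps)
  finally show ?thesis .
qed

theorem lemma3p8:
  fixes \<Lambda> \<Lambda>1 :: "real measure" and c :: real and A :: ereal and v :: "real \<Rightarrow> real"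
  assumes "prob_space \<Lambda>" and "sets \<Lambda> = sets borel" and "measure \<Lambda> {0..1} = 1"
    and "c = measure \<Lambda> {0}" and "c > 0"
    and "c < 1 \<Longrightarrow> prob_space \<Lambda>1 \<and> sets \<Lambda>1 = sets borel \<and> measure \<Lambda>1 {0} = 0"
    and "c = 1 \<Longrightarrow> \<Lambda>1 = null_measure borel"
    and "\<forall>B \<in> sets borel. measure \<Lambda> B = c * indicator B 0 + (1 - c) * measure \<Lambda>1 B"
    and "A \<ge> 0"
    and "((\<lambda>q. ereal (Psi \<Lambda>1 q / q powr (3/2))) \<longlongrightarrow> A) at_top"
    and "\<forall>t>0. v t > 1 \<and> t = (LBINT q:{v t..}. 1 / Psi \<Lambda> q)"
  shows "((\<lambda>t. ereal ((c * t / 2 * v t - 1) / sqrt t)) \<longlongrightarrow>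
            ereal (- (2 * sqrt 2 / (3 * sqrt c)) * (1 - c)) * A) (at_right 0)"
proof -
  note cpos = assms(5)
  interpret L: prob_space \<Lambda> by fact
  have c1: "c \<le> 1" using assms(4) L.prob_le_1 by simp
  have F1: "finite_measure \<Lambda>1 \<and> sets \<Lambda>1 = sets borel \<and> measure \<Lambda>1 {0} = 0"
  proof (cases "c < 1")
    case True then show ?thesis using assms(6) prob_space.finite_measure by blast
  next
    case False
    then have "\<Lambda>1 = null_measure borel" using c1 assms(7) by simp
    then show ?thesis by (auto intro: finite_measureI)
  qed
  define \<Psi> where "\<Psi> = Psi \<Lambda>"
  define \<Psi>1 where "\<Psi>1 = Psi \<Lambda>1"
  have dec: "\<Psi> q = c * (q * (q - 1) / 2) + (1 - c) * \<Psi>1 q" if "q \<ge> 2" for q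
    unfolding \<Psi>_def \<Psi>1_def
    by (rule Psi_decomp[OF assms(1,2,4)]) (use F1 assms(8) c1 that in auto)
  have \<Psi>1nn: "\<Psi>1 q \<ge> 0" if "q \<ge> 1" for q unfolding \<Psi>1_def by (rule Psi_nonneg[OF that])
  have \<Psi>nn: "\<Psi> q \<ge> 0" if "q \<ge> 1" for q unfolding \<Psi>_def by (rule Psi_nonneg[OF that])
  have \<Psi>le: "\<Psi> q \<le> q * (q - 1)" if "q \<ge> 2" for q unfolding \<Psi>_def by (rule Psi_le[OF assms(1,2) that])
  have \<Psi>pos: "\<Psi> q > 0" if "q \<ge> 2" for q
  proof -
    have "c * (q * (q - 1) / 2) > 0" using cpos that by simp
    moreover have "(1 - c) * \<Psi>1 q \<ge> 0" using c1 \<Psi>1nn[of q] that by simp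
    ultimately show ?thesis using dec[OF that] by linarith
  qed
  define R where "R q = (\<Psi> q - c * q^2 / 2) / (q * sqrt q)" for q
  have \<Psi>R: "\<Psi> q = c * q^2 / 2 + R q * q * sqrt q" if "q \<ge> 2" for q
  proof -
    have "q * sqrt q > 0" using that by simp
    then have "R q * (q * sqrt q) = \<Psi> q - c * q^2 / 2" unfolding R_def using that by simp
    then show ?thesis by (simp add: mult.assoc)
  qed
  have Rform: "R q = (1 - c) * (\<Psi>1 q / q powr (3/2)) - (c/2) / sqrt q" if q: "q \<ge> 2" for q
  proof -
    have sq: "sqrt q > 0" "sqrt q * sqrt q = q" using q by auto
    have "\<Psi> q - c * q^2 / 2 = (1 - c) * \<Psi>1 q - c * q / 2"
      using dec[OF q] by (simp add: algebra_simps power2_eq_square diff_divide_distrib)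
    then have "R q = ((1 - c) * \<Psi>1 q - c * q / 2) / (q * sqrt q)" unfolding R_def by simp
    also have "\<dots> = (1 - c) * (\<Psi>1 q / (q * sqrt q)) - (c/2) * (q / (q * sqrt q))"
      by (simp add: diff_divide_distrib)
    also have "q / (q * sqrt q) = 1 / sqrt q" using q by simp
    also have "q * sqrt q = q powr (3/2)" using powr_32[of q] q by simp
    finally show ?thesis by simp
  qed
  have vt: "v t > 1" "t = (LBINT q:{v t..}. 1 / \<Psi> q)" if "t > 0" for t
    using assms(11) that unfolding \<Psi>_def by auto
  have int: "set_integrable lborel {v t..} (\<lambda>q. 1 / \<Psi> q)" if t: "t > 0" for t
  proof (rule ccontr)
    assume "\<not> set_integrable lborel {v t..} (\<lambda>q. 1 / \<Psi> q)"
    then have "(LBINT q:{v t..}. 1 / \<Psi> q) = 0"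
      unfolding set_integrable_def set_lebesgue_integral_def by (rule not_integrable_integral_eq)
    then show False using vt[OF t] t by simp
  qed
  have vlim: "filterlim v at_top (at_right 0)"
    unfolding filterlim_at_top
  proof
    fix Z :: real
    define M where "M = max Z 2"
    have M: "M \<ge> 2" "M \<ge> Z" unfolding M_def by auto
    have "eventually (\<lambda>t. t \<in> {0<..<1/M}) (at_right 0)"
      by (rule eventually_at_right_real) (use M in simp)
    then show "eventually (\<lambda>t. Z \<le> v t) (at_right 0)"
    proof (rule eventually_mono)
      fix t assume t: "t \<in> {0<..<1/M}"
      then have t0: "t > 0" by simp
      show "Z \<le> v t"
      proof (rule ccontr)
        assume "\<not> Z \<le> v t"
        then have vM: "v t \<le> M" using M by linarith
        have nn: "\<And>q. q \<in> {v t..} \<Longrightarrow> 0 \<le> 1 / \<Psi> q" using \<Psi>nn vt(1)[OF t0] by auto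
        have sub: "{M..} \<subseteq> {v t..}" using vM by auto
        have IM: "set_integrable lborel {M..} (\<lambda>q. 1 / \<Psi> q)"
          and le1: "(LBINT q:{M..}. 1 / \<Psi> q) \<le> (LBINT q:{v t..}. 1 / \<Psi> q)"
          using set_int_sub[OF int[OF t0] sub _ nn] by auto
        have "(LBINT q:{M..}. 1 / q^2) \<le> (LBINT q:{M..}. 1 / \<Psi> q)"
        proof (rule set_integral_mono[OF int2(1) IM])
          show "0 < M" using M by simp
          fix q assume q: "q \<in> {M..}"
          then have q2: "q \<ge> 2" using M by simp
          have "\<Psi> q \<le> q^2" using \<Psi>le[OF q2] q2 by (simp add: power2_eq_square algebra_simps)
          then show "1 / q^2 \<le> 1 / \<Psi> q" using \<Psi>pos[OF q2] q2 by (intro divide_left_mono) auto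
        qed
        then have "1 / M \<le> t" using int2(2)[of M] M le1 vt(2)[OF t0] by simp
        then show False using t by simp
      qed
    qed
  qed
  define S where "S t = (c/2) * v t * sqrt (v t) * (t - 2 / (c * v t))" for t
  have tpos: "eventually (\<lambda>t. t > 0) (at_right (0::real))" by (rule eventually_at_right_less)
  have vlarge: "eventually (\<lambda>t. v t \<ge> K) (at_right 0)" for K
    using vlim unfolding filterlim_at_top by blast
  have Sup: "eventually (\<lambda>t. S t \<le> -(4*\<beta>/(3*c)) + (4*\<beta>^2/c^2) / sqrt (v t)) (at_right 0)"
    if ev: "eventually (\<lambda>q. \<beta> \<le> R q) at_top" for \<beta>
  proof -
    obtain Q where Q: "\<And>q. q \<ge> Q \<Longrightarrow> \<beta> \<le> R q" using ev unfolding eventually_at_top_linorder by blast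
    show ?thesis
      using tpos vlarge[of "max (max Q 2) (16 * \<beta>^2 / c^2)"]
    proof eventually_elim
      case (elim t)
      have v0: "v t > 0" "v t \<ge> 16 * \<beta>^2 / c^2" using elim by auto
      have H: "\<Psi> q \<ge> c * q^2 / 2 + \<beta> * q * sqrt q" if "q \<ge> v t" for q
      proof -
        have q: "q \<ge> 2" "q \<ge> Q" using that elim by auto
        have "\<beta> * (q * sqrt q) \<le> R q * (q * sqrt q)" using Q[OF q(2)] q by (intro mult_right_mono) auto
        then show ?thesis using \<Psi>R[OF q(1)] by (simp add: mult.assoc)
      qed
      show ?case using S_upper[OF cpos v0 int[OF elim(1)] H] vt(2)[OF elim(1)] unfolding S_def by simp
    qed
  qed
  have Slo: "eventually (\<lambda>t. S t \<ge> -(4*\<beta>/(3*c))) (at_right 0)"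
    if ev: "eventually (\<lambda>q. R q \<le> \<beta>) at_top" for \<beta>
  proof -
    obtain Q where Q: "\<And>q. q \<ge> Q \<Longrightarrow> R q \<le> \<beta>" using ev unfolding eventually_at_top_linorder by blast
    show ?thesis
      using tpos vlarge[of "max (max Q 2) (16 * \<beta>^2 / c^2)"]
    proof eventually_elim
      case (elim t)
      have v0: "v t > 0" "v t \<ge> 16 * \<beta>^2 / c^2" using elim by auto
      have H: "0 < \<Psi> q \<and> \<Psi> q \<le> c * q^2 / 2 + \<beta> * q * sqrt q" if "q \<ge> v t" for q
      proof -
        have q: "q \<ge> 2" "q \<ge> Q" using that elim by auto
        have "R q * (q * sqrt q) \<le> \<beta> * (q * sqrt q)" using Q[OF q(2)] q by (intro mult_right_mono) auto
        then show ?thesis using \<Psi>R[OF q(1)] \<Psi>pos[OF q(1)] by (simp add: mult.assoc)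
      qed
      show ?case using S_lower[OF cpos v0 int[OF elim(1)] H] vt(2)[OF elim(1)] unfolding S_def by simp
    qed
  qed
  have invsq: "((\<lambda>t. 1 / sqrt (v t)) \<longlongrightarrow> 0) (at_right 0)"
  proof -
    have "((\<lambda>x::real. 1 / sqrt x) \<longlongrightarrow> 0) at_top" by real_asymp
    from filterlim_compose[OF this vlim] show ?thesis by (simp add: o_def)
  qed
  have Eeq: "eventually (\<lambda>t. (c * t / 2 * v t - 1) / sqrt t = S t / sqrt (v t * t)) (at_right 0)"
    using tpos
  proof eventually_elim
    case (elim t)
    have v0: "v t > 0" using vt(1)[OF elim] by simp
    have "S t = sqrt (v t) * (c * t / 2 * v t - 1)"
      unfolding S_def using v0 cpos by (simp add: field_simps)
    then show ?case using v0 elim by (simp add: real_sqrt_mult)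
  qed
  have vtt: "eventually (\<lambda>t. v t * t = (2/c) * (1 + S t * (1 / sqrt (v t)))) (at_right 0)"
    using tpos
  proof eventually_elim
    case (elim t)
    have v0: "v t > 0" using vt(1)[OF elim] by simp
    have "S t * (1 / sqrt (v t)) = c * t / 2 * v t - 1"
      unfolding S_def using v0 cpos by (simp add: field_simps)
    then show ?case using cpos by (simp add: field_simps)
  qed
  have Rpsi1: "eventually (\<lambda>q. R q = (1 - c) * (\<Psi>1 q / q powr (3/2)) - (c/2) / sqrt q) at_top"
    using eventually_ge_at_top[of "2::real"] by eventually_elim (rule Rform)
  have csq: "((\<lambda>q::real. (c/2) / sqrt q) \<longlongrightarrow> 0) at_top" by real_asymp
  obtain a where Acases: "A = ereal a \<or> A = \<infinity>" using assms(9) by (cases A) auto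
  then show ?thesis
  proof
    assume Aa: "A = ereal a"
    have lim1: "((\<lambda>q. \<Psi>1 q / q powr (3/2)) \<longlongrightarrow> a) at_top" using assms(10) Aa unfolding \<Psi>1_def by simp
    define \<alpha> where "\<alpha> = (1 - c) * a"
    have Rlim: "(R \<longlongrightarrow> \<alpha>) at_top"
    proof -
      have "((\<lambda>q. (1 - c) * (\<Psi>1 q / q powr (3/2)) - (c/2) / sqrt q) \<longlongrightarrow> (1 - c) * a - 0) at_top"
        by (intro tendsto_intros lim1 csq)
      then show ?thesis unfolding \<alpha>_def using Rpsi1
        by (simp add: tendsto_cong)
    qed
    define \<sigma> where "\<sigma> = -(4 * \<alpha> / (3 * c))"
    have Slim: "(S \<longlongrightarrow> \<sigma>) (at_right 0)"
    proof (rule order_tendstoI)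
      fix y assume y: "y < \<sigma>"
      define \<beta> where "\<beta> = \<alpha> + (\<sigma> - y) * 3 * c / 8"
      have b: "\<alpha> < \<beta>" using y cpos unfolding \<beta>_def by simp
      have yb0: "-(4*\<beta>/(3*c)) = \<sigma> - (\<sigma> - y) / 2" using cpos unfolding \<beta>_def \<sigma>_def by (simp add: field_simps)
      have yb: "y < -(4*\<beta>/(3*c))" unfolding yb0 using y by (simp add: field_simps)
      have "eventually (\<lambda>q. R q < \<beta>) at_top" by (rule order_tendstoD(2)[OF Rlim b])
      then have "eventually (\<lambda>q. R q \<le> \<beta>) at_top" by eventually_elim simp
      from Slo[OF this] show "eventually (\<lambda>t. y < S t) (at_right 0)"
        by eventually_elim (use yb in linarith)
    next
      fix y assume y: "\<sigma> < y"
      define \<beta> where "\<beta> = \<alpha> - (y - \<sigma>) * 3 * c / 8"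
      have b: "\<beta> < \<alpha>" using y cpos unfolding \<beta>_def by simp
      have yb: "-(4*\<beta>/(3*c)) = \<sigma> + (y - \<sigma>) / 2" using cpos unfolding \<beta>_def \<sigma>_def by (simp add: field_simps)
      have "eventually (\<lambda>q. \<beta> < R q) at_top" by (rule order_tendstoD(1)[OF Rlim b])
      then have "eventually (\<lambda>q. \<beta> \<le> R q) at_top" by eventually_elim simp
      note S1 = Sup[OF this]
      have "((\<lambda>t. (4*\<beta>^2/c^2) * (1 / sqrt (v t))) \<longlongrightarrow> (4*\<beta>^2/c^2) * 0) (at_right 0)"
        by (intro tendsto_intros invsq)
      then have "eventually (\<lambda>t. (4*\<beta>^2/c^2) * (1 / sqrt (v t)) < (y - \<sigma>) / 2) (at_right 0)"
        using y by (intro order_tendstoD(2)) auto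
      with S1 show "eventually (\<lambda>t. S t < y) (at_right 0)"
      proof eventually_elim
        case (elim t)
        have e: "(4*\<beta>^2/c^2) / sqrt (v t) = (4*\<beta>^2/c^2) * (1 / sqrt (v t))" by simp
        show ?case by (rule lin1[OF elim(1)[unfolded e] elim(2) yb])
      qed
    qed
    have vttlim: "((\<lambda>t. v t * t) \<longlongrightarrow> 2 / c) (at_right 0)"
    proof -
      have "((\<lambda>t. (2/c) * (1 + S t * (1 / sqrt (v t)))) \<longlongrightarrow> (2/c) * (1 + \<sigma> * 0)) (at_right 0)"
        by (intro tendsto_intros Slim invsq)
      then show ?thesis using vtt by (simp add: tendsto_cong)
    qed
    have "((\<lambda>t. S t / sqrt (v t * t)) \<longlongrightarrow> \<sigma> / sqrt (2 / c)) (at_right 0)"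
      using cpos by (intro tendsto_intros Slim vttlim) auto
    then have Elim: "((\<lambda>t. (c * t / 2 * v t - 1) / sqrt t) \<longlongrightarrow> \<sigma> / sqrt (2 / c)) (at_right 0)"
      using Eeq by (simp add: tendsto_cong)
    have val: "\<sigma> / sqrt (2 / c) = - (2 * sqrt 2 / (3 * sqrt c)) * (1 - c) * a"
    proof -
      define r where "r = sqrt c"
      have r0: "r > 0" using cpos unfolding r_def by simp
      have cr: "c = r * r" using cpos unfolding r_def by simp
      have sq: "sqrt (2 / c) = sqrt 2 / r" unfolding r_def by (simp add: real_sqrt_divide)
      have "\<sigma> / sqrt (2 / c) = -(4 * ((1 - r * r) * a) / (3 * (r * r))) / (sqrt 2 / r)"
        unfolding sq \<sigma>_def \<alpha>_def by (simp only: cr)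
      also have "\<dots> = -(2 * sqrt 2 / (3 * r)) * (1 - r * r) * a" by (rule val_aux) (use r0 in auto)
      also have "\<dots> = - (2 * sqrt 2 / (3 * sqrt c)) * (1 - c) * a" unfolding r_def using cpos by simp
      finally show ?thesis .
    qed
    show ?thesis using Elim unfolding Aa val by simp
  next
    assume Ainf: "A = \<infinity>"
    have cl1: "c < 1"
    proof (rule ccontr)
      assume "\<not> c < 1"
      then have "\<Lambda>1 = null_measure borel" using c1 assms(7) by simp
      then have "\<And>q. Psi \<Lambda>1 q = 0" by (simp add: Psi_def set_lebesgue_integral_def)
      then have "((\<lambda>q. ereal (Psi \<Lambda>1 q / q powr (3/2))) \<longlongrightarrow> ereal 0) at_top"
        by (simp del: ereal_eq_0 zero_ereal_def)
      then have "A = ereal 0" using assms(10) tendsto_unique by (metis trivial_limit_at_top_linorder)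
      then show False using Ainf by simp
    qed
    have Rinf: "eventually (\<lambda>q. M \<le> R q) at_top" for M
    proof -
      have "eventually (\<lambda>q. ereal ((M + c) / (1 - c)) < ereal (\<Psi>1 q / q powr (3/2))) at_top"
      proof -
        have "((\<lambda>q. ereal (\<Psi>1 q / q powr (3/2))) \<longlongrightarrow> \<infinity>) at_top"
          using assms(10) Ainf unfolding \<Psi>1_def by simp
        then show ?thesis unfolding tendsto_PInfty by blast
      qed
      moreover have "eventually (\<lambda>q. (c/2) / sqrt q < c) at_top"
        by (rule order_tendstoD(2)[OF csq]) (use cpos in simp)
      ultimately show ?thesis using Rpsi1
      proof eventually_elim
        case (elim q)
        have "(M + c) / (1 - c) < \<Psi>1 q / q powr (3/2)" using elim by simp
        then have "M + c < (1 - c) * (\<Psi>1 q / q powr (3/2))" using cl1 by (simp add: field_simps)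
        then show ?case using elim by linarith
      qed
    qed
    have coef: "- (2 * sqrt 2 / (3 * sqrt c)) * (1 - c) < 0" using cl1 cpos by (simp add: field_simps)
    have "((\<lambda>t. ereal ((c * t / 2 * v t - 1) / sqrt t)) \<longlongrightarrow> -\<infinity>) (at_right 0)"
      unfolding tendsto_MInfty
    proof
      fix r :: real
      define K where "K = min (r * sqrt (2 / c)) 0 - 1"
      define \<beta> where "\<beta> = max 0 (-(3 * c / 4) * (K - 1))"
      have bK: "-(4*\<beta>/(3*c)) \<le> K - 1" using cpos unfolding \<beta>_def by (auto simp: field_simps max_def)
      note S1 = Sup[OF Rinf[of \<beta>]]
      have "((\<lambda>t. (4*\<beta>^2/c^2) * (1 / sqrt (v t))) \<longlongrightarrow> (4*\<beta>^2/c^2) * 0) (at_right 0)"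
        by (intro tendsto_intros invsq)
      then have "eventually (\<lambda>t. (4*\<beta>^2/c^2) * (1 / sqrt (v t)) < 1) (at_right 0)"
        by (intro order_tendstoD(2)) auto
      with S1 have SK: "eventually (\<lambda>t. S t < K) (at_right 0)"
      proof eventually_elim
        case (elim t)
        have e: "(4*\<beta>^2/c^2) / sqrt (v t) = (4*\<beta>^2/c^2) * (1 / sqrt (v t))" by simp
        show ?case by (rule lin2[OF elim(1)[unfolded e] elim(2) bK])
      qed
      show "eventually (\<lambda>t. ereal ((c * t / 2 * v t - 1) / sqrt t) < ereal r) (at_right 0)"
        using SK Eeq vtt tpos
      proof eventually_elim
        case (elim t)
        have v0: "v t > 1" using vt(1)[OF elim(4)] .
        have Sneg: "S t < 0" "S t < r * sqrt (2 / c)" using elim(1) unfolding K_def by auto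
        have X: "S t * (1 / sqrt (v t)) \<le> 0" by (rule mult_nonpos_nonneg) (use Sneg v0 in auto)
        have "(2/c) * (1 + S t * (1 / sqrt (v t))) \<le> (2/c) * 1" by (rule mult_left_mono) (use X cpos in auto)
        then have vt_le: "v t * t \<le> 2 / c" using elim(3) by simp
        have vt_pos: "v t * t > 0" using v0 elim(4) by simp
        have sq: "0 < sqrt (v t * t)" "sqrt (v t * t) \<le> sqrt (2 / c)" using vt_pos vt_le by auto
        have "S t / sqrt (v t * t) \<le> S t / sqrt (2 / c)"
          using Sneg sq cpos by (intro divide_left_mono_neg) auto
        also have "\<dots> < r" using Sneg cpos by (simp add: divide_less_eq)
        finally show ?case using elim(2) by simp
      qed
    qed
    moreover have "ereal (- (2 * sqrt 2 / (3 * sqrt c)) * (1 - c)) * \<infinity> = -\<infinity>"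
    proof -
      have gen: "\<And>x::real. x < 0 \<Longrightarrow> ereal x * \<infinity> = -\<infinity>" by simp
      show ?thesis by (rule gen[OF coef])
    qed
    ultimately show ?thesis unfolding Ainf by simp
  qed
qed

end
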